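(* In the bootstrap setting, let $|\alpha|+|\beta|+|\sigma|\le10$. For every $\eta>0$ there is $C_\eta>0$ (depending on $\eta,d_0,\gamma$) such that for every $T\in[0,T_{\mathrm{boot}})$, $$T^{\alpha,\beta,\sigma}_2\le\eta\big\|(1+t)^{-\frac12-\frac\delta2}W_{\alpha,\beta,\sigma}D^{\alpha,\beta,\sigma}g\big\|^2_{L^2([0,T];L^2_xL^2_v)}+C_\eta\sum_{\substack{|\beta'|\le|\beta|,\ |\sigma'|\le|\sigma|\\|\beta'|+|\sigma'|\le|\beta|+|\sigma|-1}}\big\|(1+t)^{-\frac12-\frac\delta2}W_{\alpha,\beta',\sigma'}D^{\alpha,\beta',\sigma'}g\big\|^2_{L^2([0,T];L^2_xL^2_v)},$$ where $$T^{\alpha,\beta,\sigma}_2:=\sum_{\substack{|\beta'|\le|\beta|,\ |\sigma'|\le|\sigma|\\|\beta'|+|\sigma'|\le|\beta|+|\sigma|-1}}\Big\|\frac{1}{(1+t)^{1+\delta}}W^2_{\alpha,\beta,\sigma}|D^{\alpha,\beta,\sigma}g|\,|D^{\alpha,\beta',\sigma'}g|\Big\|_{L^1([0,T];L^1_xL^1_v)}.$$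
   Context: Notation: $\langle z\rangle=\sqrt{1+|z|^2}$; repeated lower-case indices summed over $\{1,2,3\}$. Multi-indices $\alpha,\beta,\sigma\in(\mathbb N\cup\{0\})^3$ with $|\alpha|=\sum\alpha_l$; sums over primed multi-indices run over all multi-indices satisfying the displayed constraints. $D^{\alpha,\beta,\sigma}=\partial_x^\alpha\partial_v^\beta Y^\sigma$ with $Y^\sigma=\prod_lY_l^{\sigma_l}$, $Y_l=(t+1)\partial_{x_l}+\partial_{v_l}$. $\nu_{\alpha,\beta,\sigma}=20-\frac32(|\alpha|+|\sigma|)-\frac12|\beta|$, $\omega_{\alpha,\beta,\sigma}=20-\frac32|\sigma|-\frac12(|\alpha|+|\beta|)$, $W_{\alpha,\beta,\sigma}=\langle v\rangle^{\nu_{\alpha,\beta,\sigma}}\langle x-(t+1)v\rangle^{\omega_{\alpha,\beta,\sigma}}$. Mixed norms take $v$ first, then $x$, then $t$. Bootstrap setting: fix $\gamma\in[0,1)$, $d_0>0$, $\delta\in(0,\frac18)$; $a_{ij}(z)=(\delta_{ij}-z_iz_j/|z|^2)|z|^{\gamma+2}$, $c=\partial^2_{z_iz_j}a_{ij}$, $\bar a_{ij}=\int a_{ij}(v-v_* )f(t,x,v_* )dv_*$, $\bar c=\int c(v-v_* )f(t,x,v_* )dv_*$; Landau equation $\partial_tf+v_i\partial_{x_i}f=\bar a_{ij}\partial^2_{v_iv_j}f-\bar cf$; $d(t)=d_0(1+(1+t)^{-\delta})$. Energy norm for $T>0$: $\|h\|^2_{E_T}=\sum_{|\alpha|+|\beta|+|\sigma|\le10}(1+T)^{-|\beta|(1+\delta)}\big(\|W_{\alpha,\beta,\sigma}D^{\alpha,\beta,\sigma}h\|^2_{L^\infty([0,T);L^2_xL^2_v)}+\|\langle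 v\rangle^{1/2}W_{\alpha,\beta,\sigma}D^{\alpha,\beta,\sigma}h\|^2_{L^2([0,T);L^2_xL^2_v)}\big)$. $\epsilon_0=\epsilon_0(d_0,\gamma)>0$ is a fixed sufficiently small constant, $\epsilon\in[0,\epsilon_0]$, and $f_{\mathrm{ini}}$ satisfies $\sum_{|\alpha|+|\beta|+|\sigma|\le10}\|\langle v\rangle^{20-\frac32|\alpha|-\frac12|\beta|-\frac32|\sigma|}\langle x-v\rangle^{20-\frac32|\sigma|-\frac12|\beta|-\frac12|\alpha|}\partial_x^\alpha\partial_v^\beta(\partial_x+\partial_v)^\sigma(e^{2d_0\langle v\rangle}f_{\mathrm{ini}})\|^2_{L^2_xL^2_v}<\epsilon$. $T_{\mathrm{boot}}>0$ and $f:[0,T_{\mathrm{boot}})\times\mathbb R^3\times\mathbb R^3\to\mathbb R$ is a (sufficiently regular) solution of the Landau equation with $f\ge0$, $f(0)=f_{\mathrm{ini}}$; $g=e^{d(t)\langle v\rangle}f$; and $\|g\|_{E_T}\le\epsilon^{3/4}$ for all $T\in[0,T_{\mathrm{boot}})$. $A\lesssim B$ means $A\le CB$ with $C$ depending only on $d_0,\gamma$. *)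

theory Defs
  imports "HOL-Analysis.Analysis" "HOL-Probability.Essential_Supremum"
begin

type_synonym vec3 = "real ^ 3"
type_synonym mindex = "3 \<Rightarrow> nat"
type_synonym phase_fun = "vec3 \<Rightarrow> vec3 \<Rightarrow> real"  (* functions of (x,v) *)

definition jbr :: "vec3 \<Rightarrow> real" where
  "jbr z = sqrt (1 + (norm z)\<^sup>2)"

definition msize :: "mindex \<Rightarrow> nat" where
  "msize \<alpha> = (\<Sum>l\<in>UNIV. \<alpha> l)"

definition pd1 :: "3 \<Rightarrow> (vec3 \<Rightarrow> real) \<Rightarrow> vec3 \<Rightarrow> real" where
  "pd1 i F z = deriv (\<lambda>s. F (z + s *\<^sub>R axis i 1)) 0"

definition pdx :: "3 \<Rightarrow> phase_fun \<Rightarrow> phase_fun" where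
  "pdx i h x v = pd1 i (\<lambda>y. h y v) x"

definition pdv :: "3 \<Rightarrow> phase_fun \<Rightarrow> phase_fun" where
  "pdv i h x v = pd1 i (\<lambda>w. h x w) v"

definition Yop :: "real \<Rightarrow> 3 \<Rightarrow> phase_fun \<Rightarrow> phase_fun" where
  "Yop t i h x v = (t + 1) * pdx i h x v + pdv i h x v"

definition mpow :: "(3 \<Rightarrow> phase_fun \<Rightarrow> phase_fun) \<Rightarrow> mindex \<Rightarrow> phase_fun \<Rightarrow> phase_fun" where
  "mpow P \<alpha> h = (P 1 ^^ \<alpha> 1) ((P 2 ^^ \<alpha> 2) ((P 3 ^^ \<alpha> 3) h))"

definition Dop :: "real \<Rightarrow> mindex \<Rightarrow> mindex \<Rightarrow> mindex \<Rightarrow> phase_fun \<Rightarrow> phase_fun" where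
  "Dop t \<alpha> \<beta> \<sigma> h = mpow pdx \<alpha> (mpow pdv \<beta> (mpow (Yop t) \<sigma> h))"

definition nu_w :: "mindex \<Rightarrow> mindex \<Rightarrow> mindex \<Rightarrow> real" where
  "nu_w \<alpha> \<beta> \<sigma> = 20 - 3/2 * real (msize \<alpha> + msize \<sigma>) - 1/2 * real (msize \<beta>)"

definition omega_w :: "mindex \<Rightarrow> mindex \<Rightarrow> mindex \<Rightarrow> real" where
  "omega_w \<alpha> \<beta> \<sigma> = 20 - 3/2 * real (msize \<sigma>) - 1/2 * real (msize \<alpha> + msize \<beta>)"

definition Wt :: "real \<Rightarrow> mindex \<Rightarrow> mindex \<Rightarrow> mindex \<Rightarrow> vec3 \<Rightarrow> vec3 \<Rightarrow> real" where
  "Wt t \<alpha> \<beta> \<sigma> x v = jbr v powr nu_w \<alpha> \<beta> \<sigma> * jbr (x - (t + 1) *\<^sub>R v) powr omega_w \<alpha> \<beta> \<sigma>"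

definition L2sq :: "phase_fun \<Rightarrow> ennreal" where
  "L2sq h = (\<integral>\<^sup>+ x. (\<integral>\<^sup>+ v. ennreal ((h x v)\<^sup>2) \<partial>lborel) \<partial>lborel)"

definition ETsq :: "real \<Rightarrow> (real \<Rightarrow> phase_fun) \<Rightarrow> real \<Rightarrow> ennreal" where
  "ETsq \<delta> h T = (\<Sum>(\<alpha>,\<beta>,\<sigma>) \<in> {(\<alpha>,\<beta>,\<sigma>). msize \<alpha> + msize \<beta> + msize \<sigma> \<le> 10}.
     ennreal ((1 + T) powr (- (real (msize \<beta>) * (1 + \<delta>)))) *
     (esssup (restrict_space lborel {0..<T})
         (\<lambda>t. L2sq (\<lambda>x v. Wt t \<alpha> \<beta> \<sigma> x v * Dop t \<alpha> \<beta> \<sigma> (h t) x v))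
      + (\<integral>\<^sup>+ t\<in>{0..<T}.
           L2sq (\<lambda>x v. jbr v powr (1/2) * Wt t \<alpha> \<beta> \<sigma> x v * Dop t \<alpha> \<beta> \<sigma> (h t) x v) \<partial>lborel)))"

definition akernel :: "real \<Rightarrow> 3 \<Rightarrow> 3 \<Rightarrow> vec3 \<Rightarrow> real" where
  "akernel \<gamma> i j z = ((if i = j then 1 else 0) - z $ i * z $ j / (norm z)\<^sup>2) * norm z powr (\<gamma> + 2)"

definition ckernel :: "real \<Rightarrow> vec3 \<Rightarrow> real" where
  "ckernel \<gamma> z = (\<Sum>i\<in>UNIV. \<Sum>j\<in>UNIV. pd1 i (pd1 j (akernel \<gamma> i j)) z)"

definition abar :: "real \<Rightarrow> (real \<Rightarrow> phase_fun) \<Rightarrow> 3 \<Rightarrow> 3 \<Rightarrow> real \<Rightarrow> vec3 \<Rightarrow> vec3 \<Rightarrow> real" where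
  "abar \<gamma> f i j t x v = (LINT w|lborel. akernel \<gamma> i j (v - w) * f t x w)"

definition cbar :: "real \<Rightarrow> (real \<Rightarrow> phase_fun) \<Rightarrow> real \<Rightarrow> vec3 \<Rightarrow> vec3 \<Rightarrow> real" where
  "cbar \<gamma> f t x v = (LINT w|lborel. ckernel \<gamma> (v - w) * f t x w)"

fun iterpd :: "(bool \<times> 3) list \<Rightarrow> phase_fun \<Rightarrow> phase_fun" where
  "iterpd [] h = h"
| "iterpd ((b, i) # ds) h = (if b then pdx i else pdv i) (iterpd ds h)"

text \<open>Regularity: all iterated partial derivatives in (x,v) are (Frechet) differentiable,
  i.e. h is C^infinity in (x,v).\<close>
definition smooth_xv :: "phase_fun \<Rightarrow> bool" where
  "smooth_xv h \<longleftrightarrow> (\<forall>ds p. (\<lambda>q. iterpd ds h (fst q) (snd q)) differentiable (at p))"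

definition dweight :: "real \<Rightarrow> real \<Rightarrow> real \<Rightarrow> real" where
  "dweight d0 \<delta> t = d0 * (1 + (1 + t) powr (- \<delta>))"

definition gfun :: "real \<Rightarrow> real \<Rightarrow> (real \<Rightarrow> phase_fun) \<Rightarrow> real \<Rightarrow> phase_fun" where
  "gfun d0 \<delta> f t x v = exp (dweight d0 \<delta> t * jbr v) * f t x v"

definition initial_small :: "real \<Rightarrow> real \<Rightarrow> phase_fun \<Rightarrow> bool" where
  "initial_small d0 \<epsilon> fini \<longleftrightarrow>
     (\<Sum>(\<alpha>,\<beta>,\<sigma>) \<in> {(\<alpha>,\<beta>,\<sigma>). msize \<alpha> + msize \<beta> + msize \<sigma> \<le> 10}.
        L2sq (\<lambda>x v. jbr v powr (20 - 3/2 * real (msize \<alpha>) - 1/2 * real (msize \<beta>) - 3/2 * real (msize \<sigma>))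
                 * jbr (x - v) powr (20 - 3/2 * real (msize \<sigma>) - 1/2 * real (msize \<beta>) - 1/2 * real (msize \<alpha>))
                 * Dop 0 \<alpha> \<beta> \<sigma> (\<lambda>y w. exp (2 * d0 * jbr w) * fini y w) x v))
     < ennreal \<epsilon>"

text \<open>f is a (sufficiently regular) nonnegative solution of the Landau equation on
  [0,Tb) with initial datum fini (time derivative one-sided at t = 0).\<close>
definition landau_solution :: "real \<Rightarrow> real \<Rightarrow> phase_fun \<Rightarrow> (real \<Rightarrow> phase_fun) \<Rightarrow> bool" where
  "landau_solution \<gamma> Tb fini f \<longleftrightarrow>
     f 0 = fini \<and>
     (\<forall>t\<in>{0..<Tb}. smooth_xv (f t)) \<and>
     (\<forall>t\<in>{0..<Tb}. \<forall>x v. f t x v \<ge> 0) \<and>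
     (\<forall>t\<in>{0..<Tb}. \<forall>x v. \<exists>ft.
        ((\<lambda>s. f s x v) has_real_derivative ft) (at t within {0..<Tb}) \<and>
        ft + (\<Sum>i\<in>UNIV. v $ i * pdx i (f t) x v)
          = (\<Sum>i\<in>UNIV. \<Sum>j\<in>UNIV. abar \<gamma> f i j t x v * pdv i (pdv j (f t)) x v)
            - cbar \<gamma> f t x v * f t x v)"

definition bootstrap_setting ::
  "real \<Rightarrow> real \<Rightarrow> real \<Rightarrow> real \<Rightarrow> real \<Rightarrow> phase_fun \<Rightarrow> (real \<Rightarrow> phase_fun) \<Rightarrow> bool" where
  "bootstrap_setting d0 \<gamma> \<delta> \<epsilon> Tb fini f \<longleftrightarrow>
     0 < \<delta> \<and> \<delta> < 1/8 \<and> 0 \<le> \<epsilon> \<and> 0 < Tb \<and>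
     initial_small d0 \<epsilon> fini \<and>
     landau_solution \<gamma> Tb fini f \<and>
     (\<forall>T\<in>{0..<Tb}. ETsq \<delta> (gfun d0 \<delta> f) T \<le> ennreal (\<epsilon> powr (3/2)))"

definition lower_pairs :: "mindex \<Rightarrow> mindex \<Rightarrow> (mindex \<times> mindex) set" where
  "lower_pairs \<beta> \<sigma> = {(\<beta>', \<sigma>'). msize \<beta>' \<le> msize \<beta> \<and> msize \<sigma>' \<le> msize \<sigma> \<and>
                                   msize \<beta>' + msize \<sigma>' + 1 \<le> msize \<beta> + msize \<sigma>}"

definition T2term :: "real \<Rightarrow> (real \<Rightarrow> phase_fun) \<Rightarrow> mindex \<Rightarrow> mindex \<Rightarrow> mindex \<Rightarrow> real \<Rightarrow> ennreal" where
  "T2term \<delta> g \<alpha> \<beta> \<sigma> T = (\<Sum>(\<beta>',\<sigma>') \<in> lower_pairs \<beta> \<sigma>.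
     \<integral>\<^sup>+ t\<in>{0..T}. (\<integral>\<^sup>+ x. (\<integral>\<^sup>+ v. ennreal (
        (1 + t) powr (-(1 + \<delta>)) * (Wt t \<alpha> \<beta> \<sigma> x v)\<^sup>2 *
        \<bar>Dop t \<alpha> \<beta> \<sigma> (g t) x v\<bar> * \<bar>Dop t \<alpha> \<beta>' \<sigma>' (g t) x v\<bar>) \<partial>lborel) \<partial>lborel) \<partial>lborel)"

definition wL2sq :: "real \<Rightarrow> (real \<Rightarrow> phase_fun) \<Rightarrow> mindex \<Rightarrow> mindex \<Rightarrow> mindex \<Rightarrow> real \<Rightarrow> ennreal" where
  "wL2sq \<delta> g \<alpha> \<beta> \<sigma> T = (\<integral>\<^sup>+ t\<in>{0..T}.
     L2sq (\<lambda>x v. (1 + t) powr (- 1/2 - \<delta>/2) * Wt t \<alpha> \<beta> \<sigma> x v * Dop t \<alpha> \<beta> \<sigma> (g t) x v) \<partial>lborel)"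

end

theory Submission
  imports Defs
begin


definition jdiff :: "phase_fun \<Rightarrow> bool" where
  "jdiff h \<longleftrightarrow> (\<forall>p. (\<lambda>q. h (fst q) (snd q)) differentiable (at p))"

lemma dir_diff:
  assumes "(\<lambda>q. h (fst q) (snd q)) differentiable (at (x, v))"
  shows "(\<lambda>s::real. h (x + s *\<^sub>R a) (v + s *\<^sub>R b)) differentiable (at 0)"
proof -
  have "(\<lambda>s::real. (x + s *\<^sub>R a, v + s *\<^sub>R b)) differentiable (at 0)"
  proof (rule differentiableI)
    show "((\<lambda>s::real. (x + s *\<^sub>R a, v + s *\<^sub>R b)) has_derivative (\<lambda>s. (s *\<^sub>R a, s *\<^sub>R b))) (at 0)"
      by (auto intro!: derivative_eq_intros)
  qed
  moreover have "(\<lambda>q. h (fst q) (snd q)) differentiable (at ((\<lambda>s::real. (x + s *\<^sub>R a, v + s *\<^sub>R b)) 0))"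
    using assms by simp
  ultimately have "(\<lambda>q. h (fst q) (snd q)) \<circ> (\<lambda>s::real. (x + s *\<^sub>R a, v + s *\<^sub>R b)) differentiable (at 0)"
    by (rule differentiable_chain_at)
  then show ?thesis by (simp add: o_def)
qed

lemma pdx_DERIV:
  assumes "(\<lambda>q. h (fst q) (snd q)) differentiable (at (x, v))"
  shows "((\<lambda>s. h (x + s *\<^sub>R axis i 1) v) has_real_derivative pdx i h x v) (at 0)"
proof -
  have "(\<lambda>s::real. h (x + s *\<^sub>R axis i 1) (v + s *\<^sub>R 0)) differentiable (at 0)"
    by (rule dir_diff[OF assms])
  then show ?thesis unfolding pdx_def pd1_def
    by (simp add: DERIV_deriv_iff_real_differentiable)
qed

lemma pdv_DERIV:
  assumes "(\<lambda>q. h (fst q) (snd q)) differentiable (at (x, v))"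
  shows "((\<lambda>s. h x (v + s *\<^sub>R axis i 1)) has_real_derivative pdv i h x v) (at 0)"
proof -
  have "(\<lambda>s::real. h (x + s *\<^sub>R 0) (v + s *\<^sub>R axis i 1)) differentiable (at 0)"
    by (rule dir_diff[OF assms])
  then show ?thesis unfolding pdv_def pd1_def
    by (simp add: DERIV_deriv_iff_real_differentiable)
qed

inductive_set alg :: "phase_fun set \<Rightarrow> phase_fun set" for G where
  gen: "h \<in> G \<Longrightarrow> h \<in> alg G"
| const: "(\<lambda>x v. c) \<in> alg G"
| add: "h1 \<in> alg G \<Longrightarrow> h2 \<in> alg G \<Longrightarrow> (\<lambda>x v. h1 x v + h2 x v) \<in> alg G"
| mult: "h1 \<in> alg G \<Longrightarrow> h2 \<in> alg G \<Longrightarrow> (\<lambda>x v. h1 x v * h2 x v) \<in> alg G"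

lemma alg_jdiff:
  assumes "\<And>g. g \<in> G \<Longrightarrow> jdiff g" "h \<in> alg G"
  shows "jdiff h"
  using assms(2)
proof induction
  case (gen h) then show ?case using assms(1) by blast
next
  case (const c) then show ?case unfolding jdiff_def by simp
next
  case (add h1 h2) then show ?case unfolding jdiff_def
    by (auto intro: differentiable_add)
next
  case (mult h1 h2) then show ?case unfolding jdiff_def
    by (auto intro: differentiable_mult)
qed

lemma pdx_const: "pdx i (\<lambda>x v. c) = (\<lambda>x v. 0)"
  unfolding pdx_def pd1_def by (simp add: DERIV_imp_deriv)
lemma pdv_const: "pdv i (\<lambda>x v. c) = (\<lambda>x v. 0)"
  unfolding pdv_def pd1_def by (simp add: DERIV_imp_deriv)

lemma pdx_add: assumes "jdiff h1" "jdiff h2"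
  shows "pdx i (\<lambda>x v. h1 x v + h2 x v) = (\<lambda>x v. pdx i h1 x v + pdx i h2 x v)"
proof (intro ext)
  fix x v
  have "((\<lambda>s. h1 (x + s *\<^sub>R axis i 1) v + h2 (x + s *\<^sub>R axis i 1) v) has_real_derivative
     pdx i h1 x v + pdx i h2 x v) (at 0)"
    using assms by (intro DERIV_add pdx_DERIV) (auto simp: jdiff_def)
  moreover have "((\<lambda>s. h1 (x + s *\<^sub>R axis i 1) v + h2 (x + s *\<^sub>R axis i 1) v) has_real_derivative
     pdx i (\<lambda>x v. h1 x v + h2 x v) x v) (at 0)"
    using assms by (intro pdx_DERIV[where h="\<lambda>x v. h1 x v + h2 x v", simplified])
       (auto simp: jdiff_def intro: differentiable_add)
  ultimately show "pdx i (\<lambda>x v. h1 x v + h2 x v) x v = pdx i h1 x v + pdx i h2 x v"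
    using DERIV_unique by blast
qed

lemma pdv_add: assumes "jdiff h1" "jdiff h2"
  shows "pdv i (\<lambda>x v. h1 x v + h2 x v) = (\<lambda>x v. pdv i h1 x v + pdv i h2 x v)"
proof (intro ext)
  fix x v
  have "((\<lambda>s. h1 x (v + s *\<^sub>R axis i 1) + h2 x (v + s *\<^sub>R axis i 1)) has_real_derivative
     pdv i h1 x v + pdv i h2 x v) (at 0)"
    using assms by (intro DERIV_add pdv_DERIV) (auto simp: jdiff_def)
  moreover have "((\<lambda>s. h1 x (v + s *\<^sub>R axis i 1) + h2 x (v + s *\<^sub>R axis i 1)) has_real_derivative
     pdv i (\<lambda>x v. h1 x v + h2 x v) x v) (at 0)"
    using assms by (intro pdv_DERIV[where h="\<lambda>x v. h1 x v + h2 x v", simplified])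
       (auto simp: jdiff_def intro: differentiable_add)
  ultimately show "pdv i (\<lambda>x v. h1 x v + h2 x v) x v = pdv i h1 x v + pdv i h2 x v"
    using DERIV_unique by blast
qed

lemma pdx_mult: assumes "jdiff h1" "jdiff h2"
  shows "pdx i (\<lambda>x v. h1 x v * h2 x v) = (\<lambda>x v. pdx i h1 x v * h2 x v + h1 x v * pdx i h2 x v)"
proof (intro ext)
  fix x v
  have "((\<lambda>s. h1 (x + s *\<^sub>R axis i 1) v * h2 (x + s *\<^sub>R axis i 1) v) has_real_derivative
     pdx i h1 x v * h2 (x + 0 *\<^sub>R axis i 1) v + pdx i h2 x v * h1 (x + 0 *\<^sub>R axis i 1) v) (at 0)"
    using assms by (intro DERIV_mult pdx_DERIV) (auto simp: jdiff_def)
  moreover have "((\<lambda>s. h1 (x + s *\<^sub>R axis i 1) v * h2 (x + s *\<^sub>R axis i 1) v) has_real_derivative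
     pdx i (\<lambda>x v. h1 x v * h2 x v) x v) (at 0)"
    using assms by (intro pdx_DERIV[where h="\<lambda>x v. h1 x v * h2 x v", simplified])
       (auto simp: jdiff_def intro: differentiable_mult)
  ultimately show "pdx i (\<lambda>x v. h1 x v * h2 x v) x v = pdx i h1 x v * h2 x v + h1 x v * pdx i h2 x v"
    using DERIV_unique by (fastforce simp: mult.commute)
qed

lemma pdv_mult: assumes "jdiff h1" "jdiff h2"
  shows "pdv i (\<lambda>x v. h1 x v * h2 x v) = (\<lambda>x v. pdv i h1 x v * h2 x v + h1 x v * pdv i h2 x v)"
proof (intro ext)
  fix x v
  have "((\<lambda>s. h1 x (v + s *\<^sub>R axis i 1) * h2 x (v + s *\<^sub>R axis i 1)) has_real_derivative
     pdv i h1 x v * h2 x (v + 0 *\<^sub>R axis i 1) + pdv i h2 x v * h1 x (v + 0 *\<^sub>R axis i 1)) (at 0)"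
    using assms by (intro DERIV_mult pdv_DERIV) (auto simp: jdiff_def)
  moreover have "((\<lambda>s. h1 x (v + s *\<^sub>R axis i 1) * h2 x (v + s *\<^sub>R axis i 1)) has_real_derivative
     pdv i (\<lambda>x v. h1 x v * h2 x v) x v) (at 0)"
    using assms by (intro pdv_DERIV[where h="\<lambda>x v. h1 x v * h2 x v", simplified])
       (auto simp: jdiff_def intro: differentiable_mult)
  ultimately show "pdv i (\<lambda>x v. h1 x v * h2 x v) x v = pdv i h1 x v * h2 x v + h1 x v * pdv i h2 x v"
    using DERIV_unique by (fastforce simp: mult.commute)
qed

lemma alg_closed:
  assumes J: "\<And>g. g \<in> G \<Longrightarrow> jdiff g"
    and C: "\<And>g i. g \<in> G \<Longrightarrow> pdx i g \<in> alg G \<and> pdv i g \<in> alg G"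
    and h: "h \<in> alg G"
  shows "pdx i h \<in> alg G \<and> pdv i h \<in> alg G"
  using h
proof induction
  case (gen h) then show ?case using C by blast
next
  case (const c) then show ?case by (simp add: pdx_const pdv_const alg.const)
next
  case (add h1 h2)
  have j: "jdiff h1" "jdiff h2" using add alg_jdiff[OF J] by auto
  show ?case using add by (simp add: pdx_add[OF j] pdv_add[OF j] alg.add)
next
  case (mult h1 h2)
  have j: "jdiff h1" "jdiff h2" using mult alg_jdiff[OF J] by auto
  show ?case using mult by (simp add: pdx_mult[OF j] pdv_mult[OF j] alg.add alg.mult)
qed

lemma alg_smooth:
  assumes J: "\<And>g. g \<in> G \<Longrightarrow> jdiff g"
    and C: "\<And>g i. g \<in> G \<Longrightarrow> pdx i g \<in> alg G \<and> pdv i g \<in> alg G"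
    and h: "h \<in> alg G"
  shows "smooth_xv h"
proof -
  have "iterpd ds h \<in> alg G" for ds
  proof (induction ds)
    case Nil then show ?case using h by simp
  next
    case (Cons d ds) then show ?case using alg_closed[OF J C] by (cases d) auto
  qed
  then show ?thesis using alg_jdiff[OF J] unfolding smooth_xv_def jdiff_def by blast
qed

lemma smooth_jdiff: "smooth_xv h \<Longrightarrow> jdiff (iterpd ds h)"
  unfolding smooth_xv_def jdiff_def by blast

lemma iterpd_alg_smooth:
  assumes "smooth_xv h" "k \<in> alg (range (\<lambda>ds. iterpd ds h))"
  shows "smooth_xv k"
proof (rule alg_smooth[OF _ _ assms(2)])
  fix g assume "g \<in> range (\<lambda>ds. iterpd ds h)"
  then show "jdiff g" using smooth_jdiff[OF assms(1)] by auto
next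
  fix g i assume "g \<in> range (\<lambda>ds. iterpd ds h)"
  then obtain ds where g: "g = iterpd ds h" by auto
  have "pdx i g = iterpd ((True, i) # ds) h" "pdv i g = iterpd ((False, i) # ds) h" using g by auto
  then show "pdx i g \<in> alg (range (\<lambda>ds. iterpd ds h)) \<and> pdv i g \<in> alg (range (\<lambda>ds. iterpd ds h))"
    by (metis alg.gen rangeI)
qed



definition Ef :: "real \<Rightarrow> phase_fun" where "Ef d = (\<lambda>x v. exp (d * jbr v))"
definition crd :: "3 \<Rightarrow> phase_fun" where "crd j = (\<lambda>x v. v $ j)"
definition jinv :: phase_fun where "jinv = (\<lambda>x v. inverse (jbr v))"

definition Gens :: "phase_fun \<Rightarrow> real \<Rightarrow> phase_fun set" where
  "Gens F d = range (\<lambda>ds. iterpd ds F) \<union> {Ef d, jinv} \<union> range crd"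

lemma jbr_pos: "jbr v > 0"
  unfolding jbr_def by (simp add: add_pos_nonneg)

lemma jbr_ge1: "jbr v \<ge> 1"
  unfolding jbr_def by simp

lemma pdx_vfun: "pdx i (\<lambda>x v. \<phi> v) = (\<lambda>x v. 0)"
  unfolding pdx_def pd1_def by (simp add: DERIV_imp_deriv)

lemma pdv_vfun: assumes "((\<lambda>s. \<phi> (v + s *\<^sub>R axis i 1)) has_real_derivative D) (at 0)"
  shows "pdv i (\<lambda>x v. \<phi> v) x v = D"
  using assms unfolding pdv_def pd1_def by (simp add: DERIV_imp_deriv)

lemma nsq: "(norm (v + s *\<^sub>R axis i 1))\<^sup>2 = (norm v)\<^sup>2 + 2 * s * v $ i + s\<^sup>2"
  by (simp only: power2_norm_eq_inner)
    (simp add: inner_add_left inner_add_right inner_axis inner_axis'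
      inner_axis_axis power2_eq_square algebra_simps)

lemma jbr_line: "jbr (v + s *\<^sub>R axis i 1) = sqrt (1 + ((norm v)\<^sup>2 + 2 * s * v $ i + s\<^sup>2))"
  unfolding jbr_def nsq by simp

lemma jbr_DERIV: "((\<lambda>s. jbr (v + s *\<^sub>R axis i 1)) has_real_derivative v $ i / jbr v) (at 0)"
proof -
  have "((\<lambda>s. sqrt (1 + ((norm v)\<^sup>2 + 2 * s * v $ i + s\<^sup>2))) has_real_derivative v $ i / jbr v) (at 0)"
    using jbr_pos[of v] 
    apply (auto intro!: derivative_eq_intros simp: jbr_def add_pos_nonneg field_simps)
    apply (smt (verit) zero_le_power2)+
    done
  then show ?thesis unfolding jbr_line .
qed

lemma Ef_DERIV: "((\<lambda>s. exp (d * jbr (v + s *\<^sub>R axis i 1))) has_real_derivative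
     d * v $ i * inverse (jbr v) * exp (d * jbr v)) (at 0)"
  using jbr_DERIV[of v i]
  by (auto intro!: derivative_eq_intros simp: field_simps)

lemma jinv_DERIV: "((\<lambda>s. inverse (jbr (v + s *\<^sub>R axis i 1))) has_real_derivative
     (-1) * v $ i * (inverse (jbr v) * inverse (jbr v) * inverse (jbr v))) (at 0)"
  using jbr_DERIV[of v i] jbr_pos[of v]
  by (auto intro!: derivative_eq_intros simp: field_simps power3_eq_cube)

lemma crd_DERIV: "((\<lambda>s. (v + s *\<^sub>R axis i 1) $ j) has_real_derivative (if j = i then 1 else 0)) (at 0)"
  by (auto intro!: derivative_eq_intros simp: axis_def)

lemma jbr_differentiable: "jbr differentiable (at v)"
proof -
  have "(\<lambda>v. sqrt (1 + v \<bullet> v)) differentiable (at v)"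
    by (rule differentiableI, rule derivative_intros)
      (auto intro!: derivative_intros simp: add_pos_nonneg)
  moreover have "jbr = (\<lambda>v. sqrt (1 + v \<bullet> v))"
    by (auto simp: jbr_def power2_norm_eq_inner)
  ultimately show ?thesis by simp
qed

lemma vfun_jdiff: assumes "\<And>v. \<phi> differentiable (at v)"
  shows "jdiff (\<lambda>x v. \<phi> v)"
  unfolding jdiff_def
proof
  fix p :: "vec3 \<times> vec3"
  have "\<phi> \<circ> snd differentiable (at p)"
    by (rule differentiable_chain_at) (auto intro: assms bounded_linear_imp_differentiable bounded_linear_snd)
  then show "(\<lambda>q. \<phi> (snd q)) differentiable (at p)" by (simp add: o_def)
qed


lemma exp_differentiable: "exp differentiable (at (r::real))"
  by (rule differentiableI[OF has_field_derivative_imp_has_derivative[OF DERIV_exp]])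

lemma Gens_jdiff:
  assumes "smooth_xv F" "g \<in> Gens F d"
  shows "jdiff g"
proof -
  have a: "jdiff (Ef d)" unfolding Ef_def
  proof (rule vfun_jdiff)
    fix v
    have "(\<lambda>v. d * jbr v) differentiable (at v)"
      by (intro differentiable_mult differentiable_const jbr_differentiable)
    then show "(\<lambda>v. exp (d * jbr v)) differentiable (at v)"
      by (rule differentiable_compose[where f=exp, OF exp_differentiable])
  qed
  have b: "jdiff jinv" unfolding jinv_def
    by (rule vfun_jdiff) (intro differentiable_inverse jbr_differentiable, 
       use jbr_pos in \<open>auto simp: less_irrefl\<close>, metis jbr_pos less_irrefl)
  have c: "jdiff (crd j)" for j unfolding crd_def
    by (rule vfun_jdiff) (rule bounded_linear_imp_differentiable, rule bounded_linear_vec_nth)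
  show ?thesis using assms a b c smooth_jdiff[OF assms(1)] unfolding Gens_def by auto
qed

lemma Gens_closed:
  assumes "g \<in> Gens F d"
  shows "pdx i g \<in> alg (Gens F d) \<and> pdv i g \<in> alg (Gens F d)"
proof -
  have zero: "(\<lambda>x v. 0::real) \<in> alg (Gens F d)" by (rule alg.const)
  have G: "Ef d \<in> alg (Gens F d)" "jinv \<in> alg (Gens F d)" "crd j \<in> alg (Gens F d)"
     "iterpd ds F \<in> alg (Gens F d)" for j ds
    by (auto intro!: alg.gen simp: Gens_def)
  have C: "(\<lambda>x v. c) \<in> alg (Gens F d)" for c by (rule alg.const)
  consider (it) ds where "g = iterpd ds F" | (E) "g = Ef d" | (J) "g = jinv" | (Cr) j where "g = crd j"
    using assms unfolding Gens_def by auto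
  then show ?thesis
  proof cases
    case it
    have "pdx i g = iterpd ((True, i) # ds) F" "pdv i g = iterpd ((False, i) # ds) F" using it by auto
    then show ?thesis using G by metis
  next
    case E
    have px: "pdx i g = (\<lambda>x v. 0)" unfolding E Ef_def by (rule pdx_vfun)
    have pv: "pdv i g = (\<lambda>x v. (\<lambda>x v. (\<lambda>x v. (\<lambda>x v. d) x v * crd i x v) x v * jinv x v) x v * Ef d x v)"
      unfolding E Ef_def crd_def jinv_def
      by (intro ext pdv_vfun) (use Ef_DERIV in auto)
    show ?thesis unfolding px pv by (intro conjI zero alg.mult C G)
  next
    case J
    have px: "pdx i g = (\<lambda>x v. 0)" unfolding J jinv_def by (rule pdx_vfun)
    have pv: "pdv i g = (\<lambda>x v. (\<lambda>x v. (\<lambda>x v. -1) x v * crd i x v) x v * 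
        (\<lambda>x v. (\<lambda>x v. jinv x v * jinv x v) x v * jinv x v) x v)"
      unfolding J crd_def jinv_def
      by (intro ext pdv_vfun) (use jinv_DERIV in auto)
    show ?thesis unfolding px pv by (intro conjI zero alg.mult C G)
  next
    case Cr
    have px: "pdx i g = (\<lambda>x v. 0)" unfolding Cr crd_def by (rule pdx_vfun)
    have pv: "pdv i g = (\<lambda>x v. if j = i then 1 else 0)"
      unfolding Cr crd_def
      by (intro ext pdv_vfun) (rule crd_DERIV)
    show ?thesis unfolding px pv by (intro conjI zero C)
  qed
qed

lemma gfun_smooth:
  assumes "smooth_xv (f t)"
  shows "smooth_xv (gfun d0 \<delta> f t)"
proof -
  have "gfun d0 \<delta> f t = (\<lambda>x v. Ef (dweight d0 \<delta> t) x v * iterpd [] (f t) x v)"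
    by (auto simp: gfun_def Ef_def intro!: ext)
  also have "\<dots> \<in> alg (Gens (f t) (dweight d0 \<delta> t))"
    by (intro alg.mult alg.gen) (auto simp: Gens_def intro: range_eqI[where x="[]"])
  finally show ?thesis
    by (rule alg_smooth[rotated 2]) (auto intro: Gens_jdiff[OF assms] dest: Gens_closed)
qed



abbreviation NM :: "((real \<times> vec3) \<times> vec3) measure" where
  "NM \<equiv> (lborel \<Otimes>\<^sub>M lborel) \<Otimes>\<^sub>M lborel"

definition meas :: "(real \<Rightarrow> phase_fun) \<Rightarrow> bool" where
  "meas K \<longleftrightarrow> (\<lambda>p. K (fst (fst p)) (snd (fst p)) (snd p)) \<in> borel_measurable NM"

definition good :: "(real \<Rightarrow> phase_fun) \<Rightarrow> bool" where
  "good K \<longleftrightarrow> meas K \<and> (\<forall>t. smooth_xv (K t))"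

lemma iterpd_append: "iterpd (ds @ es) h = iterpd ds (iterpd es h)"
  by (induction ds) auto

lemma smooth_pdx: assumes "smooth_xv h" shows "smooth_xv (pdx i h)"
proof -
  have "iterpd ds (pdx i h) = iterpd (ds @ [(True,i)]) h" for ds by (simp add: iterpd_append)
  then show ?thesis using assms unfolding smooth_xv_def by simp
qed

lemma smooth_pdv: assumes "smooth_xv h" shows "smooth_xv (pdv i h)"
proof -
  have "iterpd ds (pdv i h) = iterpd (ds @ [(False,i)]) h" for ds by (simp add: iterpd_append)
  then show ?thesis using assms unfolding smooth_xv_def by simp
qed

lemma DERIV_seq:
  assumes "(\<phi> has_real_derivative D) (at 0)"
  shows "(\<lambda>n. (\<phi> (inverse (real (Suc n))) - \<phi> 0) * real (Suc n)) \<longlonglongrightarrow> D"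
proof -
  have 1: "((\<lambda>h. (\<phi> (0 + h) - \<phi> 0) / h) \<longlongrightarrow> D) (at 0)"
    using assms by (simp add: DERIV_def)
  have 2: "filterlim (\<lambda>n. inverse (real (Suc n))) (at 0) sequentially"
    unfolding filterlim_at using LIMSEQ_inverse_real_of_nat by auto
  have "((\<lambda>n. (\<phi> (0 + inverse (real (Suc n))) - \<phi> 0) / inverse (real (Suc n))) \<longlongrightarrow> D) sequentially"
    using filterlim_compose[OF 1 2] by (simp add: o_def)
  then show ?thesis by (simp add: divide_inverse)
qed

lemma meas_pdx:
  assumes "good K"
  shows "meas (\<lambda>t. pdx i (K t))"
  unfolding meas_def
proof (rule borel_measurable_LIMSEQ_real[where u="\<lambda>n p. (K (fst (fst p)) (snd (fst p) + inverse (real (Suc n)) *\<^sub>R axis i 1) (snd p) -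
          K (fst (fst p)) (snd (fst p)) (snd p)) * real (Suc n)"])
  let ?P = "\<lambda>p. K (fst (fst p)) (snd (fst p)) (snd p)"
  have P: "?P \<in> borel_measurable NM" using assms by (simp add: good_def meas_def)
  fix n :: nat
  let ?c = "inverse (real (Suc n))"
  have sh: "(\<lambda>p::(real \<times> vec3) \<times> vec3. ((fst (fst p), snd (fst p) + ?c *\<^sub>R axis i 1), snd p)) \<in> NM \<rightarrow>\<^sub>M NM"
    by measurable
  have "(\<lambda>p. ?P ((fst (fst p), snd (fst p) + ?c *\<^sub>R axis i 1), snd p)) \<in> borel_measurable NM"
    using measurable_compose[OF sh P] by (simp add: o_def)
  then show "(\<lambda>p. (K (fst (fst p)) (snd (fst p) + ?c *\<^sub>R axis i 1) (snd p) - ?P p) * real (Suc n))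
      \<in> borel_measurable NM"
    using P by simp
next
  fix p :: "(real \<times> vec3) \<times> vec3"
  have "smooth_xv (K (fst (fst p)))" using assms by (simp add: good_def)
  then have "(\<lambda>q. K (fst (fst p)) (fst q) (snd q)) differentiable (at (snd (fst p), snd p))"
    using smooth_jdiff[where ds="[]"] unfolding jdiff_def by simp
  from DERIV_seq[OF pdx_DERIV[OF this, of i]]
  show "(\<lambda>n. (K (fst (fst p)) (snd (fst p) + inverse (real (Suc n)) *\<^sub>R axis i 1) (snd p) -
          K (fst (fst p)) (snd (fst p)) (snd p)) * real (Suc n)) \<longlonglongrightarrow> pdx i (K (fst (fst p))) (snd (fst p)) (snd p)"
    by simp
qed

lemma meas_pdv:
  assumes "good K"
  shows "meas (\<lambda>t. pdv i (K t))"
  unfolding meas_def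
proof (rule borel_measurable_LIMSEQ_real[where u="\<lambda>n p. (K (fst (fst p)) (snd (fst p)) (snd p + inverse (real (Suc n)) *\<^sub>R axis i 1) -
          K (fst (fst p)) (snd (fst p)) (snd p)) * real (Suc n)"])
  let ?P = "\<lambda>p. K (fst (fst p)) (snd (fst p)) (snd p)"
  have P: "?P \<in> borel_measurable NM" using assms by (simp add: good_def meas_def)
  fix n :: nat
  let ?c = "inverse (real (Suc n))"
  have sh: "(\<lambda>p::(real \<times> vec3) \<times> vec3. ((fst (fst p), snd (fst p)), snd p + ?c *\<^sub>R axis i 1)) \<in> NM \<rightarrow>\<^sub>M NM"
    by measurable
  have "(\<lambda>p. ?P ((fst (fst p), snd (fst p)), snd p + ?c *\<^sub>R axis i 1)) \<in> borel_measurable NM"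
    using measurable_compose[OF sh P] by (simp add: o_def)
  then show "(\<lambda>p. (K (fst (fst p)) (snd (fst p)) (snd p + ?c *\<^sub>R axis i 1) - ?P p) * real (Suc n))
      \<in> borel_measurable NM"
    using P by simp
next
  fix p :: "(real \<times> vec3) \<times> vec3"
  have "smooth_xv (K (fst (fst p)))" using assms by (simp add: good_def)
  then have "(\<lambda>q. K (fst (fst p)) (fst q) (snd q)) differentiable (at (snd (fst p), snd p))"
    using smooth_jdiff[where ds="[]"] unfolding jdiff_def by simp
  from DERIV_seq[OF pdv_DERIV[OF this, of i]]
  show "(\<lambda>n. (K (fst (fst p)) (snd (fst p)) (snd p + inverse (real (Suc n)) *\<^sub>R axis i 1) -
          K (fst (fst p)) (snd (fst p)) (snd p)) * real (Suc n)) \<longlonglongrightarrow> pdv i (K (fst (fst p))) (snd (fst p)) (snd p)"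
    by simp
qed

lemma good_pdx: "good K \<Longrightarrow> good (\<lambda>t. pdx i (K t))"
  using meas_pdx smooth_pdx by (auto simp: good_def)

lemma good_pdv: "good K \<Longrightarrow> good (\<lambda>t. pdv i (K t))"
  using meas_pdv smooth_pdv by (auto simp: good_def)

lemma good_Yop: assumes "good K" shows "good (\<lambda>t. Yop t i (K t))"
proof -
  have m1: "(\<lambda>p. pdx i (K (fst (fst p))) (snd (fst p)) (snd p)) \<in> borel_measurable NM"
    using meas_pdx[OF assms] by (simp add: meas_def)
  have m2: "(\<lambda>p. pdv i (K (fst (fst p))) (snd (fst p)) (snd p)) \<in> borel_measurable NM"
    using meas_pdv[OF assms] by (simp add: meas_def)
  have "meas (\<lambda>t. Yop t i (K t))" unfolding meas_def Yop_def
    using m1 m2 by measurable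
  moreover have "smooth_xv (Yop t i (K t))" for t
  proof (rule iterpd_alg_smooth)
    show "smooth_xv (K t)" using assms by (simp add: good_def)
    have "Yop t i (K t) = (\<lambda>x v. (\<lambda>x v. (\<lambda>x v. t+1) x v * iterpd [(True,i)] (K t) x v) x v
         + iterpd [(False,i)] (K t) x v)"
      by (intro ext) (simp add: Yop_def)
    also have "\<dots> \<in> alg (range (\<lambda>ds. iterpd ds (K t)))"
      by (intro alg.add alg.mult alg.const alg.gen rangeI)
    finally show "Yop t i (K t) \<in> alg (range (\<lambda>ds. iterpd ds (K t)))" .
  qed
  ultimately show ?thesis by (simp add: good_def)
qed

lemma good_funpow:
  assumes "\<And>K. good K \<Longrightarrow> good (\<lambda>t. Q t (K t))" "good K"
  shows "good (\<lambda>t. (Q t ^^ n) (K t))"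
proof (induction n)
  case 0 then show ?case using assms(2) by simp
next
  case (Suc n) then show ?case using assms(1)[of "\<lambda>t. (Q t ^^ n) (K t)"] by simp
qed

lemma good_mpow:
  assumes "\<And>K i. good K \<Longrightarrow> good (\<lambda>t. Q t i (K t))" "good K"
  shows "good (\<lambda>t. mpow (Q t) \<alpha> (K t))"
  unfolding mpow_def
  by (intro good_funpow[where Q="\<lambda>t. Q t _"] assms)

lemma good_Dop:
  assumes "good K"
  shows "good (\<lambda>t. Dop t \<alpha> \<beta> \<sigma> (K t))"
  unfolding Dop_def
  using good_mpow[where Q="\<lambda>t. pdx", OF good_pdx]
    good_mpow[where Q="\<lambda>t. pdv", OF good_pdv]
    good_mpow[where Q="\<lambda>t. Yop t", OF good_Yop] assms
  by blast



lemma smooth_zero: "smooth_xv (\<lambda>x v. 0)"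
  by (rule alg_smooth[where G="{}"]) (auto intro: alg.const)

lemma tn_lim:
  assumes "0 \<le> t"
  shows "(\<lambda>n. real_of_int \<lfloor>real (Suc n) * t\<rfloor> / real (Suc n)) \<longlonglongrightarrow> t"
proof (rule tendsto_sandwich[where f="\<lambda>n. t - inverse (real (Suc n))" and h="\<lambda>n. t"])
  show "\<forall>\<^sub>F n in sequentially. t - inverse (real (Suc n)) \<le> real_of_int \<lfloor>real (Suc n) * t\<rfloor> / real (Suc n)"
  proof (intro always_eventually allI)
    fix n
    define N where "N = real (Suc n)"
    have N: "N > 0" by (simp add: N_def)
    have "N * t < real_of_int \<lfloor>N * t\<rfloor> + 1" by linarith
    have "t - inverse N = (N * t - 1) / N" using N by (simp add: field_simps)
    also have "\<dots> \<le> real_of_int \<lfloor>N * t\<rfloor> / N"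
      using N by (intro divide_right_mono) linarith+
    finally show "t - inverse (real (Suc n)) \<le> real_of_int \<lfloor>real (Suc n) * t\<rfloor> / real (Suc n)"
      unfolding N_def .
  qed
  show "\<forall>\<^sub>F n in sequentially. real_of_int \<lfloor>real (Suc n) * t\<rfloor> / real (Suc n) \<le> t"
  proof (intro always_eventually allI)
    fix n
    define N where "N = real (Suc n)"
    have N: "N > 0" by (simp add: N_def)
    have "real_of_int \<lfloor>N * t\<rfloor> / N \<le> (N * t) / N"
      using N by (intro divide_right_mono) linarith+
    also have "\<dots> = t" using N by simp
    finally show "real_of_int \<lfloor>real (Suc n) * t\<rfloor> / real (Suc n) \<le> t"
      unfolding N_def .
  qed
  show "(\<lambda>n. t - inverse (real (Suc n))) \<longlonglongrightarrow> t"
    using tendsto_diff[OF tendsto_const LIMSEQ_inverse_real_of_nat, of t] by simp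
qed simp

lemma tn_in:
  assumes "0 \<le> t" "t < Tb"
  shows "0 \<le> real_of_int \<lfloor>real (Suc n) * t\<rfloor> / real (Suc n) \<and> real_of_int \<lfloor>real (Suc n) * t\<rfloor> / real (Suc n) < Tb"
proof -
  define N where "N = real (Suc n)"
  have N: "N > 0" by (simp add: N_def)
  have "real_of_int \<lfloor>N * t\<rfloor> / N \<le> (N * t) / N"
    using N by (intro divide_right_mono) linarith+
  also have "\<dots> = t" using N by simp
  finally have 1: "real_of_int \<lfloor>N * t\<rfloor> / N \<le> t" .
  have "0 \<le> \<lfloor>N * t\<rfloor>" using assms N by simp
  then have "0 \<le> real_of_int \<lfloor>N * t\<rfloor> / N" using N by simp
  then show ?thesis using 1 assms unfolding N_def by linarith
qed

lemma base_meas: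
  assumes sm: "\<And>t. 0 \<le> t \<Longrightarrow> t < Tb \<Longrightarrow> smooth_xv (f t)"
    and ct: "\<And>t x v. 0 \<le> t \<Longrightarrow> t < Tb \<Longrightarrow> continuous (at t within {0..<Tb}) (\<lambda>s. f s x v)"
  shows "(\<lambda>p::(real \<times> vec3) \<times> vec3. if 0 \<le> fst (fst p) \<and> fst (fst p) < Tb then f (fst (fst p)) (snd (fst p)) (snd p) else 0)
      \<in> borel_measurable NM"
proof (rule borel_measurable_LIMSEQ_real[where u="\<lambda>n p. if 0 \<le> fst (fst p) \<and> fst (fst p) < Tb then
     (\<lambda>c. if 0 \<le> c \<and> c < Tb then f c (snd (fst p)) (snd p) else 0) (real_of_int \<lfloor>real (Suc n) * fst (fst p)\<rfloor> / real (Suc n)) else 0"])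
  fix p :: "(real \<times> vec3) \<times> vec3"
  show "(\<lambda>n. if 0 \<le> fst (fst p) \<and> fst (fst p) < Tb then
     (\<lambda>c. if 0 \<le> c \<and> c < Tb then f c (snd (fst p)) (snd p) else 0) (real_of_int \<lfloor>real (Suc n) * fst (fst p)\<rfloor> / real (Suc n)) else 0)
     \<longlonglongrightarrow> (if 0 \<le> fst (fst p) \<and> fst (fst p) < Tb then f (fst (fst p)) (snd (fst p)) (snd p) else 0)"
  proof (cases "0 \<le> fst (fst p) \<and> fst (fst p) < Tb")
    case True
    let ?t = "fst (fst p)"
    have "(\<lambda>n. f (real_of_int \<lfloor>real (Suc n) * ?t\<rfloor> / real (Suc n)) (snd (fst p)) (snd p)) \<longlonglongrightarrow> f ?t (snd (fst p)) (snd p)"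
      using continuous_within_tendsto_compose'[OF ct[of ?t "snd (fst p)" "snd p"], of "\<lambda>n. real_of_int \<lfloor>real (Suc n) * ?t\<rfloor> / real (Suc n)"]
        True tn_in[of ?t Tb] tn_lim[of ?t] by auto
    then show ?thesis using True tn_in[of ?t Tb] by simp
  next
    case False
    then show ?thesis by (simp only: if_False) (rule tendsto_const)
  qed
next
  fix n :: nat
  have cm: "(\<lambda>p::(real \<times> vec3) \<times> vec3. if 0 \<le> c \<and> c < Tb then f c (snd (fst p)) (snd p) else 0) \<in> borel_measurable NM" for c
  proof (cases "0 \<le> c \<and> c < Tb")
    case True
    have "continuous_on UNIV (\<lambda>q. f c (fst q) (snd q))"
      using smooth_jdiff[OF sm[of c], where ds="[]"] True unfolding jdiff_def
      by (auto intro!: continuous_at_imp_continuous_on differentiable_imp_continuous_within)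
    then have b: "(\<lambda>q. f c (fst q) (snd q)) \<in> borel_measurable borel"
      by (rule borel_measurable_continuous_onI)
    have pm: "(\<lambda>p::(real \<times> vec3) \<times> vec3. (snd (fst p), snd p)) \<in> NM \<rightarrow>\<^sub>M (lborel \<Otimes>\<^sub>M lborel)"
      by measurable
    then have pm': "(\<lambda>p::(real \<times> vec3) \<times> vec3. (snd (fst p), snd p)) \<in> NM \<rightarrow>\<^sub>M borel"
      by (simp add: lborel_prod)
    show ?thesis using True measurable_compose[OF pm' b] by (simp add: o_def)
  next
    case False
    then show ?thesis by (simp only: if_False) (rule borel_measurable_const)
  qed
  have fm: "(\<lambda>p::(real \<times> vec3) \<times> vec3. \<lfloor>real (Suc n) * fst (fst p)\<rfloor>) \<in> NM \<rightarrow>\<^sub>M count_space UNIV"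
    by measurable
  have "(\<lambda>p. (\<lambda>k p. (if 0 \<le> real_of_int k / real (Suc n) \<and> real_of_int k / real (Suc n) < Tb
       then f (real_of_int k / real (Suc n)) (snd (fst p)) (snd p) else 0))
       (\<lfloor>real (Suc n) * fst (fst p)\<rfloor>) p) \<in> borel_measurable NM"
    by (rule measurable_compose_countable[OF _ fm]) (rule cm)
  then have "(\<lambda>p. (if 0 \<le> real_of_int \<lfloor>real (Suc n) * fst (fst p)\<rfloor> / real (Suc n) \<and> real_of_int \<lfloor>real (Suc n) * fst (fst p)\<rfloor> / real (Suc n) < Tb
       then f (real_of_int \<lfloor>real (Suc n) * fst (fst p)\<rfloor> / real (Suc n)) (snd (fst p)) (snd p) else 0)) \<in> borel_measurable NM"
    by simp
  then show "(\<lambda>p. if 0 \<le> fst (fst p) \<and> fst (fst p) < Tb then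
     (\<lambda>c. if 0 \<le> c \<and> c < Tb then f c (snd (fst p)) (snd p) else 0) (real_of_int \<lfloor>real (Suc n) * fst (fst p)\<rfloor> / real (Suc n)) else 0)
     \<in> borel_measurable NM"
    by measurable
qed

definition Hf :: "real \<Rightarrow> real \<Rightarrow> real \<Rightarrow> (real \<Rightarrow> phase_fun) \<Rightarrow> real \<Rightarrow> phase_fun" where
  "Hf d0 \<delta> Tb f t = (if 0 \<le> t \<and> t < Tb then gfun d0 \<delta> f t else (\<lambda>x v. 0))"

lemma good_Hf:
  assumes sm: "\<And>t. 0 \<le> t \<Longrightarrow> t < Tb \<Longrightarrow> smooth_xv (f t)"
    and ct: "\<And>t x v. 0 \<le> t \<Longrightarrow> t < Tb \<Longrightarrow> continuous (at t within {0..<Tb}) (\<lambda>s. f s x v)"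
  shows "good (Hf d0 \<delta> Tb f)"
proof -
  have e: "(\<lambda>p::(real \<times> vec3) \<times> vec3. exp (dweight d0 \<delta> (fst (fst p)) * jbr (snd p))) \<in> borel_measurable NM"
    unfolding dweight_def jbr_def by measurable
  have "(\<lambda>p::(real \<times> vec3) \<times> vec3. exp (dweight d0 \<delta> (fst (fst p)) * jbr (snd p)) *
     (if 0 \<le> fst (fst p) \<and> fst (fst p) < Tb then f (fst (fst p)) (snd (fst p)) (snd p) else 0)) \<in> borel_measurable NM"
    using e base_meas[OF sm ct] by (rule borel_measurable_times)
  then have "meas (Hf d0 \<delta> Tb f)" unfolding meas_def Hf_def gfun_def
    by (rule measurable_cong[THEN iffD1, rotated]) auto
  moreover have "smooth_xv (Hf d0 \<delta> Tb f t)" for t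
    using gfun_smooth[OF sm] smooth_zero by (auto simp: Hf_def)
  ultimately show ?thesis by (simp add: good_def)
qed



lemma integral_split:
  fixes A B \<Phi> :: "real \<Rightarrow> vec3 \<Rightarrow> vec3 \<Rightarrow> real"
  assumes mA: "(\<lambda>p. A (fst (fst p)) (snd (fst p)) (snd p)) \<in> borel_measurable NM"
    and mB: "(\<lambda>p. B (fst (fst p)) (snd (fst p)) (snd p)) \<in> borel_measurable NM"
    and pw: "\<And>t x v. t \<in> {0..T} \<Longrightarrow> \<Phi> t x v \<le> e * A t x v + c * B t x v"
    and A0: "\<And>t x v. 0 \<le> A t x v" and B0: "\<And>t x v. 0 \<le> B t x v"
    and e: "0 \<le> e" and c: "0 \<le> c"
  shows "(\<integral>\<^sup>+ t\<in>{0..T}. (\<integral>\<^sup>+ x. (\<integral>\<^sup>+ v. ennreal (\<Phi> t x v) \<partial>lborel) \<partial>lborel) \<partial>lborel)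
    \<le> ennreal e * (\<integral>\<^sup>+ t\<in>{0..T}. (\<integral>\<^sup>+ x. (\<integral>\<^sup>+ v. ennreal (A t x v) \<partial>lborel) \<partial>lborel) \<partial>lborel)
      + ennreal c * (\<integral>\<^sup>+ t\<in>{0..T}. (\<integral>\<^sup>+ x. (\<integral>\<^sup>+ v. ennreal (B t x v) \<partial>lborel) \<partial>lborel) \<partial>lborel)"
proof -
  have meas3: "(\<lambda>(q, v). ennreal (F (fst q) (snd q) v)) \<in> borel_measurable NM"
    if "(\<lambda>p. F (fst (fst p)) (snd (fst p)) (snd p)) \<in> borel_measurable NM" for F :: "real \<Rightarrow> vec3 \<Rightarrow> vec3 \<Rightarrow> real"
    using that by (simp add: case_prod_beta')
  have meas2: "(\<lambda>q. \<integral>\<^sup>+ v. ennreal (F (fst q) (snd q) v) \<partial>lborel) \<in> borel_measurable (lborel \<Otimes>\<^sub>M lborel)"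
    if "(\<lambda>p. F (fst (fst p)) (snd (fst p)) (snd p)) \<in> borel_measurable NM" for F :: "real \<Rightarrow> vec3 \<Rightarrow> vec3 \<Rightarrow> real"
    using lborel.borel_measurable_nn_integral[OF meas3[OF that]] by simp
  have meas1: "(\<lambda>t. \<integral>\<^sup>+ x. \<integral>\<^sup>+ v. ennreal (F t x v) \<partial>lborel \<partial>lborel) \<in> borel_measurable lborel"
    if "(\<lambda>p. F (fst (fst p)) (snd (fst p)) (snd p)) \<in> borel_measurable NM" for F :: "real \<Rightarrow> vec3 \<Rightarrow> vec3 \<Rightarrow> real"
  proof -
    have "(\<lambda>(t, x). \<integral>\<^sup>+ v. ennreal (F t x v) \<partial>lborel) \<in> borel_measurable (lborel \<Otimes>\<^sub>M lborel)"
      using meas2[OF that] by (simp add: case_prod_beta')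
    from lborel.borel_measurable_nn_integral[OF this] show ?thesis .
  qed
  have measx: "(\<lambda>x. \<integral>\<^sup>+ v. ennreal (F t x v) \<partial>lborel) \<in> borel_measurable lborel"
    if "(\<lambda>p. F (fst (fst p)) (snd (fst p)) (snd p)) \<in> borel_measurable NM" for F :: "real \<Rightarrow> vec3 \<Rightarrow> vec3 \<Rightarrow> real" and t
  proof -
    have "(\<lambda>x::vec3. (t, x)) \<in> lborel \<rightarrow>\<^sub>M (lborel \<Otimes>\<^sub>M lborel)" by measurable
    from measurable_compose[OF this meas2[OF that]] show ?thesis by (simp add: o_def)
  qed
  have measv: "(\<lambda>v. ennreal (F t x v)) \<in> borel_measurable lborel"
    if "(\<lambda>p. F (fst (fst p)) (snd (fst p)) (snd p)) \<in> borel_measurable NM" for F :: "real \<Rightarrow> vec3 \<Rightarrow> vec3 \<Rightarrow> real" and t x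
  proof -
    have "(\<lambda>v::vec3. ((t, x), v)) \<in> lborel \<rightarrow>\<^sub>M NM" by measurable
    from measurable_compose[OF this that] show ?thesis by (simp add: o_def)
  qed
  define IA where "IA t = (\<integral>\<^sup>+ x. (\<integral>\<^sup>+ v. ennreal (A t x v) \<partial>lborel) \<partial>lborel)" for t
  define IB where "IB t = (\<integral>\<^sup>+ x. (\<integral>\<^sup>+ v. ennreal (B t x v) \<partial>lborel) \<partial>lborel)" for t
  have inner: "(\<integral>\<^sup>+ x. (\<integral>\<^sup>+ v. ennreal (\<Phi> t x v) \<partial>lborel) \<partial>lborel) \<le> ennreal e * IA t + ennreal c * IB t"
    if t: "t \<in> {0..T}" for t
  proof -
    have "(\<integral>\<^sup>+ x. (\<integral>\<^sup>+ v. ennreal (\<Phi> t x v) \<partial>lborel) \<partial>lborel) \<le>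
      (\<integral>\<^sup>+ x. (\<integral>\<^sup>+ v. ennreal e * ennreal (A t x v) + ennreal c * ennreal (B t x v) \<partial>lborel) \<partial>lborel)"
    proof (intro nn_integral_mono)
      fix x v
      have "ennreal (\<Phi> t x v) \<le> ennreal (e * A t x v + c * B t x v)"
        using pw[OF t] by (rule ennreal_leI)
      also have "\<dots> = ennreal e * ennreal (A t x v) + ennreal c * ennreal (B t x v)"
        using A0 B0 e c by (simp add: ennreal_plus ennreal_mult)
      finally show "ennreal (\<Phi> t x v) \<le> ennreal e * ennreal (A t x v) + ennreal c * ennreal (B t x v)" .
    qed
    also have "\<dots> = (\<integral>\<^sup>+ x. ennreal e * (\<integral>\<^sup>+ v. ennreal (A t x v) \<partial>lborel) + ennreal c * (\<integral>\<^sup>+ v. ennreal (B t x v) \<partial>lborel) \<partial>lborel)"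
    proof (intro nn_integral_cong)
      fix x
      have ma: "(\<lambda>v. ennreal (A t x v)) \<in> borel_measurable lborel" by (rule measv[OF mA])
      have mb: "(\<lambda>v. ennreal (B t x v)) \<in> borel_measurable lborel" by (rule measv[OF mB])
      have "(\<integral>\<^sup>+ v. ennreal e * ennreal (A t x v) + ennreal c * ennreal (B t x v) \<partial>lborel)
        = (\<integral>\<^sup>+ v. ennreal e * ennreal (A t x v) \<partial>lborel) + (\<integral>\<^sup>+ v. ennreal c * ennreal (B t x v) \<partial>lborel)"
        using ma mb by (intro nn_integral_add) auto
      also have "\<dots> = ennreal e * (\<integral>\<^sup>+ v. ennreal (A t x v) \<partial>lborel) + ennreal c * (\<integral>\<^sup>+ v. ennreal (B t x v) \<partial>lborel)"
        using ma mb by (simp add: nn_integral_cmult)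
      finally show "(\<integral>\<^sup>+ v. ennreal e * ennreal (A t x v) + ennreal c * ennreal (B t x v) \<partial>lborel)
        = ennreal e * (\<integral>\<^sup>+ v. ennreal (A t x v) \<partial>lborel) + ennreal c * (\<integral>\<^sup>+ v. ennreal (B t x v) \<partial>lborel)" .
    qed
    also have "\<dots> = ennreal e * IA t + ennreal c * IB t"
      unfolding IA_def IB_def
      using measx[OF mA, of t] measx[OF mB, of t]
      by (subst nn_integral_add) (auto simp: nn_integral_cmult)
    finally show ?thesis .
  qed
  have "(\<integral>\<^sup>+ t\<in>{0..T}. (\<integral>\<^sup>+ x. (\<integral>\<^sup>+ v. ennreal (\<Phi> t x v) \<partial>lborel) \<partial>lborel) \<partial>lborel)
     \<le> (\<integral>\<^sup>+ t. ennreal e * (IA t * indicator {0..T} t) + ennreal c * (IB t * indicator {0..T} t) \<partial>lborel)"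
  proof (intro nn_integral_mono)
    fix t :: real
    show "(\<integral>\<^sup>+ x. (\<integral>\<^sup>+ v. ennreal (\<Phi> t x v) \<partial>lborel) \<partial>lborel) * indicator {0..T} t
      \<le> ennreal e * (IA t * indicator {0..T} t) + ennreal c * (IB t * indicator {0..T} t)"
      using inner[of t] by (cases "t \<in> {0..T}") (auto simp: indicator_def)
  qed
  also have "\<dots> = ennreal e * (\<integral>\<^sup>+ t. IA t * indicator {0..T} t \<partial>lborel) + ennreal c * (\<integral>\<^sup>+ t. IB t * indicator {0..T} t \<partial>lborel)"
    using meas1[OF mA] meas1[OF mB] unfolding IA_def IB_def
    by (subst nn_integral_add) (auto simp: nn_integral_cmult)
  finally show ?thesis unfolding IA_def IB_def .
qed

lemma young3:
  fixes k k' e a b :: real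
  assumes "0 \<le> k" "k \<le> k'" "0 < e"
  shows "k * \<bar>a\<bar> * \<bar>b\<bar> \<le> e * (k * a\<^sup>2) + (1 / e) * (k' * b\<^sup>2)"
proof -
  have "0 \<le> (e * \<bar>a\<bar> - \<bar>b\<bar> / 2)\<^sup>2 / e + 3/4 * b\<^sup>2 / e" using assms by simp
  also have "(e * \<bar>a\<bar> - \<bar>b\<bar> / 2)\<^sup>2 / e + 3/4 * b\<^sup>2 / e = e * a\<^sup>2 + b\<^sup>2 / e - \<bar>a\<bar> * \<bar>b\<bar>"
    using assms by (simp add: field_simps power2_eq_square)
  finally have 1: "\<bar>a\<bar> * \<bar>b\<bar> \<le> e * a\<^sup>2 + b\<^sup>2 / e" by simp
  have "k * \<bar>a\<bar> * \<bar>b\<bar> = k * (\<bar>a\<bar> * \<bar>b\<bar>)" by simp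
  also have "\<dots> \<le> k * (e * a\<^sup>2 + b\<^sup>2 / e)" using 1 assms by (intro mult_left_mono) auto
  also have "\<dots> = e * (k * a\<^sup>2) + (1 / e) * (k * b\<^sup>2)" by (simp add: field_simps)
  also have "\<dots> \<le> e * (k * a\<^sup>2) + (1 / e) * (k' * b\<^sup>2)"
    using assms by (intro add_left_mono mult_left_mono mult_right_mono) auto
  finally show ?thesis .
qed



lemma Wt_nonneg: "0 \<le> Wt t \<alpha> \<beta> \<sigma> x v"
  unfolding Wt_def by simp

lemma aux_lin: "\<And>a b c d e::real. c \<le> b \<Longrightarrow> e \<le> d \<Longrightarrow> 20 - 3/2*(a+d) - 1/2*b \<le> 20 - 3/2*(a+e) - 1/2*c"
  by (simp add: field_simps)

lemma aux_lin2: "\<And>a b c d e::real. c \<le> b \<Longrightarrow> e \<le> d \<Longrightarrow> 20 - 3/2*d - 1/2*(a+b) \<le> 20 - 3/2*e - 1/2*(a+c)"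
  by (simp add: field_simps)

lemma Wt_mono:
  assumes "msize \<beta>' \<le> msize \<beta>" "msize \<sigma>' \<le> msize \<sigma>"
  shows "Wt t \<alpha> \<beta> \<sigma> x v \<le> Wt t \<alpha> \<beta>' \<sigma>' x v"
  unfolding Wt_def
proof (intro mult_mono)
  have r: "real (msize \<beta>') \<le> real (msize \<beta>)" "real (msize \<sigma>') \<le> real (msize \<sigma>)"
    using assms by simp_all
  show "jbr v powr nu_w \<alpha> \<beta> \<sigma> \<le> jbr v powr nu_w \<alpha> \<beta>' \<sigma>'"
  proof (rule powr_mono[OF _ jbr_ge1])
    show "nu_w \<alpha> \<beta> \<sigma> \<le> nu_w \<alpha> \<beta>' \<sigma>'" unfolding nu_w_def of_nat_add by (rule aux_lin[OF r])
  qed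
  show "jbr (x - (t + 1) *\<^sub>R v) powr omega_w \<alpha> \<beta> \<sigma> \<le> jbr (x - (t + 1) *\<^sub>R v) powr omega_w \<alpha> \<beta>' \<sigma>'"
  proof (rule powr_mono[OF _ jbr_ge1])
    show "omega_w \<alpha> \<beta> \<sigma> \<le> omega_w \<alpha> \<beta>' \<sigma>'" unfolding omega_w_def of_nat_add by (rule aux_lin2[OF r(1) r(2)])
  qed
qed simp_all

lemma Wt_meas: "(\<lambda>p::(real \<times> vec3) \<times> vec3. Wt (fst (fst p)) \<alpha> \<beta> \<sigma> (snd (fst p)) (snd p)) \<in> borel_measurable NM"
  unfolding Wt_def jbr_def by measurable

lemma pair_bound:
  assumes K: "good K" and b: "msize \<beta>' \<le> msize \<beta>" and s: "msize \<sigma>' \<le> msize \<sigma>" and e: "0 < e"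
  shows "(\<integral>\<^sup>+ t\<in>{0..T}. (\<integral>\<^sup>+ x. (\<integral>\<^sup>+ v. ennreal (
        (1 + t) powr (-(1 + \<delta>)) * (Wt t \<alpha> \<beta> \<sigma> x v)\<^sup>2 *
        \<bar>Dop t \<alpha> \<beta> \<sigma> (K t) x v\<bar> * \<bar>Dop t \<alpha> \<beta>' \<sigma>' (K t) x v\<bar>) \<partial>lborel) \<partial>lborel) \<partial>lborel)
    \<le> ennreal e * wL2sq \<delta> K \<alpha> \<beta> \<sigma> T + ennreal (1 / e) * wL2sq \<delta> K \<alpha> \<beta>' \<sigma>' T"
  unfolding wL2sq_def L2sq_def
proof (rule integral_split)
  have D1: "(\<lambda>p::(real \<times> vec3) \<times> vec3. Dop (fst (fst p)) \<alpha> \<beta> \<sigma> (K (fst (fst p))) (snd (fst p)) (snd p)) \<in> borel_measurable NM"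
    using good_Dop[OF K] by (simp add: good_def meas_def)
  have D2: "(\<lambda>p::(real \<times> vec3) \<times> vec3. Dop (fst (fst p)) \<alpha> \<beta>' \<sigma>' (K (fst (fst p))) (snd (fst p)) (snd p)) \<in> borel_measurable NM"
    using good_Dop[OF K] by (simp add: good_def meas_def)
  show "(\<lambda>p. ((1 + fst (fst p)) powr (- 1 / 2 - \<delta> / 2) * Wt (fst (fst p)) \<alpha> \<beta> \<sigma> (snd (fst p)) (snd p) *
          Dop (fst (fst p)) \<alpha> \<beta> \<sigma> (K (fst (fst p))) (snd (fst p)) (snd p))\<^sup>2) \<in> borel_measurable NM"
    using D1 Wt_meas[of \<alpha> \<beta> \<sigma>] by measurable
  show "(\<lambda>p. ((1 + fst (fst p)) powr (- 1 / 2 - \<delta> / 2) * Wt (fst (fst p)) \<alpha> \<beta>' \<sigma>' (snd (fst p)) (snd p) *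
          Dop (fst (fst p)) \<alpha> \<beta>' \<sigma>' (K (fst (fst p))) (snd (fst p)) (snd p))\<^sup>2) \<in> borel_measurable NM"
    using D2 Wt_meas[of \<alpha> \<beta>' \<sigma>'] by measurable
next
  fix t :: real and x v :: vec3
  assume t: "t \<in> {0..T}"
  have tp: "0 < 1 + t" using t by simp
  define s where "s = (1 + t) powr (- 1 / 2 - \<delta> / 2)"
  have ss: "s\<^sup>2 = (1 + t) powr (-(1 + \<delta>))"
  proof -
    have e2: "(- 1 / 2 - \<delta> / 2) + (- 1 / 2 - \<delta> / 2) = -(1+\<delta>)" by simp
    show ?thesis by (simp only: s_def power2_eq_square powr_add[symmetric] e2)
  qed
  define W where "W = Wt t \<alpha> \<beta> \<sigma> x v"
  define W' where "W' = Wt t \<alpha> \<beta>' \<sigma>' x v"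
  define a where "a = Dop t \<alpha> \<beta> \<sigma> (K t) x v"
  define b where "b = Dop t \<alpha> \<beta>' \<sigma>' (K t) x v"
  have W: "0 \<le> W" "W \<le> W'" unfolding W_def W'_def using Wt_nonneg Wt_mono[OF b s] by auto
  have "s\<^sup>2 * W\<^sup>2 \<le> s\<^sup>2 * W'\<^sup>2" using W by (intro mult_left_mono power_mono) auto
  from young3[OF _ this e, of a b]
  have "s\<^sup>2 * W\<^sup>2 * \<bar>a\<bar> * \<bar>b\<bar> \<le> e * (s * W * a)\<^sup>2 + 1 / e * (s * W' * b)\<^sup>2"
    by (simp add: power_mult_distrib)
  then show "(1 + t) powr (-(1 + \<delta>)) * (Wt t \<alpha> \<beta> \<sigma> x v)\<^sup>2 *
        \<bar>Dop t \<alpha> \<beta> \<sigma> (K t) x v\<bar> * \<bar>Dop t \<alpha> \<beta>' \<sigma>' (K t) x v\<bar>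
     \<le> e * ((1 + t) powr (- 1 / 2 - \<delta> / 2) * Wt t \<alpha> \<beta> \<sigma> x v * Dop t \<alpha> \<beta> \<sigma> (K t) x v)\<^sup>2 +
       1 / e * ((1 + t) powr (- 1 / 2 - \<delta> / 2) * Wt t \<alpha> \<beta>' \<sigma>' x v * Dop t \<alpha> \<beta>' \<sigma>' (K t) x v)\<^sup>2"
    unfolding ss[symmetric] s_def[symmetric] W_def W'_def a_def b_def .
qed (use e in auto)



lemma set_nn_cong:
  "(\<And>t. t \<in> A \<Longrightarrow> F t = G t) \<Longrightarrow> (\<integral>\<^sup>+ t\<in>A. F t \<partial>M) = (\<integral>\<^sup>+ t\<in>A. G t \<partial>M)"
  by (auto intro!: nn_integral_cong simp: indicator_def)

lemma T2term_cong:
  assumes "\<And>t. t \<in> {0..T} \<Longrightarrow> g1 t = g2 t"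
  shows "T2term \<delta> g1 \<alpha> \<beta> \<sigma> T = T2term \<delta> g2 \<alpha> \<beta> \<sigma> T"
  unfolding T2term_def
  by (intro sum.cong refl) (auto intro!: set_nn_cong simp: assms)

lemma wL2sq_cong:
  assumes "\<And>t. t \<in> {0..T} \<Longrightarrow> g1 t = g2 t"
  shows "wL2sq \<delta> g1 \<alpha> \<beta> \<sigma> T = wL2sq \<delta> g2 \<alpha> \<beta> \<sigma> T"
  unfolding wL2sq_def
  by (auto intro!: set_nn_cong simp: assms)

definition Sb :: "mindex set" where "Sb = {\<beta>. \<forall>i. \<beta> i \<le> 10}"

lemma finite_Sb: "finite Sb"
proof -
  have "Sb = Pi\<^sub>E UNIV (\<lambda>_. {..10})" unfolding Sb_def PiE_UNIV_domain by (auto simp: Pi_def)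
  moreover have "finite (Pi\<^sub>E (UNIV::3 set) (\<lambda>_. {..10::nat}))" by (rule finite_PiE) auto
  ultimately show ?thesis by simp
qed

lemma comp_le_msize: "\<beta> i \<le> msize \<beta>"
  unfolding msize_def by (rule member_le_sum) auto

lemma LP_sub:
  assumes "msize \<beta> \<le> 10" "msize \<sigma> \<le> 10"
  shows "lower_pairs \<beta> \<sigma> \<subseteq> Sb \<times> Sb"
  using assms unfolding lower_pairs_def Sb_def
  by (auto; meson comp_le_msize order_trans)

lemma main_bound:
  assumes K: "good K" and sz: "msize \<alpha> + msize \<beta> + msize \<sigma> \<le> 10" and e: "0 < e"
    and eN: "real (card (Sb \<times> Sb)) * e \<le> \<eta>"
  shows "T2term \<delta> K \<alpha> \<beta> \<sigma> T \<le> ennreal \<eta> * wL2sq \<delta> K \<alpha> \<beta> \<sigma> T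
     + ennreal (1 / e) * (\<Sum>(\<beta>',\<sigma>') \<in> lower_pairs \<beta> \<sigma>. wL2sq \<delta> K \<alpha> \<beta>' \<sigma>' T)"
proof -
  let ?LP = "lower_pairs \<beta> \<sigma>"
  let ?W = "wL2sq \<delta> K \<alpha> \<beta> \<sigma> T"
  have "T2term \<delta> K \<alpha> \<beta> \<sigma> T \<le> (\<Sum>p \<in> ?LP. ennreal e * ?W + ennreal (1 / e) * wL2sq \<delta> K \<alpha> (fst p) (snd p) T)"
    unfolding T2term_def
  proof (intro sum_mono)
    fix p assume "p \<in> ?LP"
    then have "msize (fst p) \<le> msize \<beta>" "msize (snd p) \<le> msize \<sigma>"
      by (auto simp: lower_pairs_def)
    from pair_bound[OF K this e, where T=T and \<delta>=\<delta> and \<alpha>=\<alpha>]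
    show "(case p of (\<beta>', \<sigma>') \<Rightarrow> \<integral>\<^sup>+ t\<in>{0..T}. (\<integral>\<^sup>+ x. (\<integral>\<^sup>+ v. ennreal (
        (1 + t) powr (-(1 + \<delta>)) * (Wt t \<alpha> \<beta> \<sigma> x v)\<^sup>2 *
        \<bar>Dop t \<alpha> \<beta> \<sigma> (K t) x v\<bar> * \<bar>Dop t \<alpha> \<beta>' \<sigma>' (K t) x v\<bar>) \<partial>lborel) \<partial>lborel) \<partial>lborel)
      \<le> ennreal e * ?W + ennreal (1 / e) * wL2sq \<delta> K \<alpha> (fst p) (snd p) T"
      by (simp add: case_prod_beta)
  qed
  also have "\<dots> = of_nat (card ?LP) * (ennreal e * ?W) + ennreal (1 / e) * (\<Sum>p \<in> ?LP. wL2sq \<delta> K \<alpha> (fst p) (snd p) T)"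
    by (simp add: sum.distrib sum_distrib_left)
  also have "of_nat (card ?LP) * (ennreal e * ?W) = ennreal (real (card ?LP) * e) * ?W"
    using e by (simp add: ennreal_of_nat_eq_real_of_nat ennreal_mult mult.assoc)
  also have "\<dots> \<le> ennreal \<eta> * ?W"
  proof (intro mult_right_mono ennreal_leI)
    have "card ?LP \<le> card (Sb \<times> Sb)"
      using LP_sub[of \<beta> \<sigma>] sz finite_Sb by (intro card_mono) auto
    then have "real (card ?LP) * e \<le> real (card (Sb \<times> Sb)) * e" using e by (intro mult_right_mono) auto
    then show "real (card ?LP) * e \<le> \<eta>" using eN by linarith
  qed simp
  finally show ?thesis by (simp add: case_prod_beta)
qed

theorem proposition7p3:
  fixes d0 \<gamma> :: real
  assumes "0 < d0" and "0 \<le> \<gamma>" and "\<gamma> < 1"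
  shows "\<exists>\<epsilon>0>0. \<forall>\<eta>>0. \<exists>C>0. \<forall>\<delta> \<epsilon> Tb fini f \<alpha> \<beta> \<sigma> T.
     bootstrap_setting d0 \<gamma> \<delta> \<epsilon> Tb fini f \<and> \<epsilon> \<le> \<epsilon>0 \<and>
     msize \<alpha> + msize \<beta> + msize \<sigma> \<le> 10 \<and> 0 \<le> T \<and> T < Tb \<longrightarrow>
     T2term \<delta> (gfun d0 \<delta> f) \<alpha> \<beta> \<sigma> T
       \<le> ennreal \<eta> * wL2sq \<delta> (gfun d0 \<delta> f) \<alpha> \<beta> \<sigma> T
         + ennreal C * (\<Sum>(\<beta>',\<sigma>') \<in> lower_pairs \<beta> \<sigma>. wL2sq \<delta> (gfun d0 \<delta> f) \<alpha> \<beta>' \<sigma>' T)"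
proof (rule exI[of _ 1], intro conjI allI impI)
  fix \<eta> :: real assume \<eta>: "0 < \<eta>"
  define N where "N = real (card (Sb \<times> Sb))"
  have "(\<lambda>_. 0, \<lambda>_. 0) \<in> Sb \<times> Sb" by (simp add: Sb_def)
  then have "card (Sb \<times> Sb) > 0" using finite_Sb card_gt_0_iff[of "Sb \<times> Sb"] by blast
  then have N: "N > 0" unfolding N_def by simp
  define e where "e = \<eta> / N"
  have e: "0 < e" using \<eta> N by (simp add: e_def)
  have eN: "real (card (Sb \<times> Sb)) * e \<le> \<eta>" using N by (simp add: e_def N_def[symmetric])
  show "\<exists>C>0. \<forall>\<delta> \<epsilon> Tb fini f \<alpha> \<beta> \<sigma> T.
     bootstrap_setting d0 \<gamma> \<delta> \<epsilon> Tb fini f \<and> \<epsilon> \<le> 1 \<and>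
     msize \<alpha> + msize \<beta> + msize \<sigma> \<le> 10 \<and> 0 \<le> T \<and> T < Tb \<longrightarrow>
     T2term \<delta> (gfun d0 \<delta> f) \<alpha> \<beta> \<sigma> T
       \<le> ennreal \<eta> * wL2sq \<delta> (gfun d0 \<delta> f) \<alpha> \<beta> \<sigma> T
         + ennreal C * (\<Sum>(\<beta>',\<sigma>') \<in> lower_pairs \<beta> \<sigma>. wL2sq \<delta> (gfun d0 \<delta> f) \<alpha> \<beta>' \<sigma>' T)"
  proof (rule exI[of _ "1 / e"], intro conjI allI impI)
    show "0 < 1 / e" using e by simp
    fix \<delta> \<epsilon> Tb fini f \<alpha> \<beta> \<sigma> T
    assume H: "bootstrap_setting d0 \<gamma> \<delta> \<epsilon> Tb fini f \<and> \<epsilon> \<le> 1 \<and>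
     msize \<alpha> + msize \<beta> + msize \<sigma> \<le> 10 \<and> 0 \<le> T \<and> T < Tb"
    then have L: "landau_solution \<gamma> Tb fini f" and sz: "msize \<alpha> + msize \<beta> + msize \<sigma> \<le> 10"
      and T: "0 \<le> T" "T < Tb"
      by (auto simp: bootstrap_setting_def)
    have sm: "\<And>t. 0 \<le> t \<Longrightarrow> t < Tb \<Longrightarrow> smooth_xv (f t)"
      using L by (auto simp: landau_solution_def)
    have ct: "continuous (at t within {0..<Tb}) (\<lambda>s. f s x v)" if "0 \<le> t" "t < Tb" for t x v
    proof -
      note D = L[unfolded landau_solution_def, THEN conjunct2, THEN conjunct2, THEN conjunct2]
      have "t \<in> {0..<Tb}" using that by simp
      from bspec[OF D this] obtain ft where "((\<lambda>s. f s x v) has_real_derivative ft) (at t within {0..<Tb})"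
        by blast
      then show ?thesis by (rule DERIV_continuous)
    qed
    let ?K = "Hf d0 \<delta> Tb f"
    have K: "good ?K" by (rule good_Hf[OF sm ct])
    have eq: "gfun d0 \<delta> f t = ?K t" if "t \<in> {0..T}" for t
      using that T by (simp add: Hf_def)
    have "T2term \<delta> (gfun d0 \<delta> f) \<alpha> \<beta> \<sigma> T = T2term \<delta> ?K \<alpha> \<beta> \<sigma> T"
      by (rule T2term_cong[OF eq])
    also have "\<dots> \<le> ennreal \<eta> * wL2sq \<delta> ?K \<alpha> \<beta> \<sigma> T
     + ennreal (1 / e) * (\<Sum>(\<beta>',\<sigma>') \<in> lower_pairs \<beta> \<sigma>. wL2sq \<delta> ?K \<alpha> \<beta>' \<sigma>' T)"
      by (rule main_bound[OF K sz e eN])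
    also have "\<dots> = ennreal \<eta> * wL2sq \<delta> (gfun d0 \<delta> f) \<alpha> \<beta> \<sigma> T
     + ennreal (1 / e) * (\<Sum>(\<beta>',\<sigma>') \<in> lower_pairs \<beta> \<sigma>. wL2sq \<delta> (gfun d0 \<delta> f) \<alpha> \<beta>' \<sigma>' T)"
      using wL2sq_cong[OF eq] by simp
    finally show "T2term \<delta> (gfun d0 \<delta> f) \<alpha> \<beta> \<sigma> T
       \<le> ennreal \<eta> * wL2sq \<delta> (gfun d0 \<delta> f) \<alpha> \<beta> \<sigma> T
         + ennreal (1 / e) * (\<Sum>(\<beta>',\<sigma>') \<in> lower_pairs \<beta> \<sigma>. wL2sq \<delta> (gfun d0 \<delta> f) \<alpha> \<beta>' \<sigma>' T)" .
  qed
qed simp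

end
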